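(* Let $\mathcal{C}$ be a category that has finite biproducts, and let $X$ be an object of $\mathcal{C}$. Then $X$ is abelian if and only if the diagonal $\Delta \colon X \to X \oplus X$ is a kernel of some split epimorphism.
   Context: A category has finite biproducts if it has a zero object and every pair of objects has a biproduct, i.e. an object $X_1\oplus X_2$ with injections $i_k$ and projections $p_k$ such that $(X_1\oplus X_2,i_1,i_2)$ is a coproduct, $(X_1\oplus X_2,p_1,p_2)$ is a product, $p_k i_k = 1$ and $p_k i_j = 0$ for $j\ne k$. Such a category has a unique enrichment in commutative monoids, where $0$ is the zero morphism and $f+g = \nabla (f\oplus g)\Delta$ (with $\Delta=\begin{bmatrix}1\\1\end{bmatrix}$ the diagonal and $\nabla=\begin{bmatrix}1&1\end{bmatrix}$ the codiagonal). An object $X$ is called abelian if $1\colon X\to X$ has an additive inverse with respect to this enrichment. A kernel of $f\colon Y\to Z$ is an equaliser of $f$ and the zero morphism $0\colon Y\to Z$. *)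

theory Defs
  imports Main
begin

record ('o, 'a) cat =
  Obj :: "'o set"
  Arr :: "'a set"
  Dom :: "'a \<Rightarrow> 'o"
  Cod :: "'a \<Rightarrow> 'o"
  Comp :: "'a \<Rightarrow> 'a \<Rightarrow> 'a"   (* Comp C g f = g \<circ> f, defined when Cod f = Dom g *)
  Id :: "'o \<Rightarrow> 'a"

definition hom :: "('o, 'a) cat \<Rightarrow> 'o \<Rightarrow> 'o \<Rightarrow> 'a set" where
  "hom C a b = {f \<in> Arr C. Dom C f = a \<and> Cod C f = b}"

definition category :: "('o, 'a) cat \<Rightarrow> bool" where
  "category C \<longleftrightarrow>
     (\<forall>f \<in> Arr C. Dom C f \<in> Obj C \<and> Cod C f \<in> Obj C) \<and>
     (\<forall>a \<in> Obj C. Id C a \<in> hom C a a) \<and>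
     (\<forall>f \<in> Arr C. \<forall>g \<in> Arr C. Cod C f = Dom C g \<longrightarrow>
        Comp C g f \<in> hom C (Dom C f) (Cod C g)) \<and>
     (\<forall>f \<in> Arr C. \<forall>g \<in> Arr C. \<forall>h \<in> Arr C. Cod C f = Dom C g \<longrightarrow> Cod C g = Dom C h \<longrightarrow>
        Comp C h (Comp C g f) = Comp C (Comp C h g) f) \<and>
     (\<forall>f \<in> Arr C. Comp C (Id C (Cod C f)) f = f \<and> Comp C f (Id C (Dom C f)) = f)"

definition zero_obj :: "('o, 'a) cat \<Rightarrow> 'o \<Rightarrow> bool" where
  "zero_obj C z \<longleftrightarrow> z \<in> Obj C \<and>
     (\<forall>a \<in> Obj C. (\<exists>!f. f \<in> hom C a z) \<and> (\<exists>!f. f \<in> hom C z a))"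

definition the_zero :: "('o, 'a) cat \<Rightarrow> 'o" where
  "the_zero C = (SOME z. zero_obj C z)"

definition zero_mor :: "('o, 'a) cat \<Rightarrow> 'o \<Rightarrow> 'o \<Rightarrow> 'a" where
  "zero_mor C a b = Comp C (THE f. f \<in> hom C (the_zero C) b) (THE f. f \<in> hom C a (the_zero C))"

definition is_biproduct ::
  "('o, 'a) cat \<Rightarrow> 'o \<Rightarrow> 'o \<Rightarrow> 'o \<Rightarrow> 'a \<Rightarrow> 'a \<Rightarrow> 'a \<Rightarrow> 'a \<Rightarrow> bool" where
  "is_biproduct C x1 x2 s i1 i2 p1 p2 \<longleftrightarrow>
     s \<in> Obj C \<and>
     i1 \<in> hom C x1 s \<and> i2 \<in> hom C x2 s \<and> p1 \<in> hom C s x1 \<and> p2 \<in> hom C s x2 \<and>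
     (\<forall>y \<in> Obj C. \<forall>f1 \<in> hom C x1 y. \<forall>f2 \<in> hom C x2 y.
        \<exists>!h. h \<in> hom C s y \<and> Comp C h i1 = f1 \<and> Comp C h i2 = f2) \<and>
     (\<forall>y \<in> Obj C. \<forall>f1 \<in> hom C y x1. \<forall>f2 \<in> hom C y x2.
        \<exists>!h. h \<in> hom C y s \<and> Comp C p1 h = f1 \<and> Comp C p2 h = f2) \<and>
     Comp C p1 i1 = Id C x1 \<and> Comp C p2 i2 = Id C x2 \<and>
     Comp C p1 i2 = zero_mor C x2 x1 \<and> Comp C p2 i1 = zero_mor C x1 x2"

definition has_finite_biproducts :: "('o, 'a) cat \<Rightarrow> bool" where
  "has_finite_biproducts C \<longleftrightarrow> category C \<and> (\<exists>z. zero_obj C z) \<and>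
     (\<forall>x1 \<in> Obj C. \<forall>x2 \<in> Obj C. \<exists>s i1 i2 p1 p2. is_biproduct C x1 x2 s i1 i2 p1 p2)"

definition bp :: "('o, 'a) cat \<Rightarrow> 'o \<Rightarrow> 'o \<Rightarrow> 'o \<times> 'a \<times> 'a \<times> 'a \<times> 'a" where
  "bp C x1 x2 = (SOME (s, i1, i2, p1, p2). is_biproduct C x1 x2 s i1 i2 p1 p2)"

definition bp_obj :: "('o, 'a) cat \<Rightarrow> 'o \<Rightarrow> 'o \<Rightarrow> 'o" where
  "bp_obj C x1 x2 = fst (bp C x1 x2)"
definition bp_i1 :: "('o, 'a) cat \<Rightarrow> 'o \<Rightarrow> 'o \<Rightarrow> 'a" where
  "bp_i1 C x1 x2 = fst (snd (bp C x1 x2))"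
definition bp_i2 :: "('o, 'a) cat \<Rightarrow> 'o \<Rightarrow> 'o \<Rightarrow> 'a" where
  "bp_i2 C x1 x2 = fst (snd (snd (bp C x1 x2)))"
definition bp_p1 :: "('o, 'a) cat \<Rightarrow> 'o \<Rightarrow> 'o \<Rightarrow> 'a" where
  "bp_p1 C x1 x2 = fst (snd (snd (snd (bp C x1 x2))))"
definition bp_p2 :: "('o, 'a) cat \<Rightarrow> 'o \<Rightarrow> 'o \<Rightarrow> 'a" where
  "bp_p2 C x1 x2 = snd (snd (snd (snd (bp C x1 x2))))"

definition diag :: "('o, 'a) cat \<Rightarrow> 'o \<Rightarrow> 'a" where
  "diag C x = (THE h. h \<in> hom C x (bp_obj C x x) \<and>
      Comp C (bp_p1 C x x) h = Id C x \<and> Comp C (bp_p2 C x x) h = Id C x)"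

definition codiag :: "('o, 'a) cat \<Rightarrow> 'o \<Rightarrow> 'a" where
  "codiag C x = (THE h. h \<in> hom C (bp_obj C x x) x \<and>
      Comp C h (bp_i1 C x x) = Id C x \<and> Comp C h (bp_i2 C x x) = Id C x)"

definition bp_map :: "('o, 'a) cat \<Rightarrow> 'a \<Rightarrow> 'a \<Rightarrow> 'a" where
  "bp_map C f g = (let a1 = Dom C f; a2 = Dom C g; b1 = Cod C f; b2 = Cod C g in
     (THE h. h \<in> hom C (bp_obj C a1 a2) (bp_obj C b1 b2) \<and>
        Comp C (bp_p1 C b1 b2) h = Comp C f (bp_p1 C a1 a2) \<and>
        Comp C (bp_p2 C b1 b2) h = Comp C g (bp_p2 C a1 a2)))"

definition cplus :: "('o, 'a) cat \<Rightarrow> 'a \<Rightarrow> 'a \<Rightarrow> 'a" where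
  "cplus C f g = Comp C (codiag C (Cod C f)) (Comp C (bp_map C f g) (diag C (Dom C f)))"

definition abelian_obj :: "('o, 'a) cat \<Rightarrow> 'o \<Rightarrow> bool" where
  "abelian_obj C x \<longleftrightarrow> x \<in> Obj C \<and>
     (\<exists>g \<in> hom C x x. cplus C g (Id C x) = zero_mor C x x \<and> cplus C (Id C x) g = zero_mor C x x)"

definition is_kernel :: "('o, 'a) cat \<Rightarrow> 'a \<Rightarrow> 'a \<Rightarrow> bool" where
  "is_kernel C k f \<longleftrightarrow> k \<in> Arr C \<and> f \<in> Arr C \<and> Cod C k = Dom C f \<and>
     Comp C f k = Comp C (zero_mor C (Dom C f) (Cod C f)) k \<and>
     (\<forall>w \<in> Obj C. \<forall>m \<in> hom C w (Dom C f).
        Comp C f m = Comp C (zero_mor C (Dom C f) (Cod C f)) m \<longrightarrow>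
        (\<exists>!u. u \<in> hom C w (Dom C k) \<and> Comp C k u = m))"

definition split_epi :: "('o, 'a) cat \<Rightarrow> 'a \<Rightarrow> bool" where
  "split_epi C e \<longleftrightarrow> e \<in> Arr C \<and>
     (\<exists>s \<in> hom C (Cod C e) (Dom C e). Comp C e s = Id C (Cod C e))"

end

theory Submission imports Defs begin

locale bpc =
  fixes C :: "('o, 'a) cat"
  assumes hfb: "has_finite_biproducts C"
begin

abbreviation cmp (infixr "\<cdot>" 55) where "g \<cdot> f \<equiv> Comp C g f"

lemma cat: "category C" using hfb unfolding has_finite_biproducts_def by blast

lemma hom_objs: "f \<in> hom C A B \<Longrightarrow> A \<in> Obj C \<and> B \<in> Obj C"
  using cat unfolding category_def hom_def by blast

lemma hom_arr: "f \<in> hom C A B \<Longrightarrow> f \<in> Arr C \<and> Dom C f = A \<and> Cod C f = B"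
  unfolding hom_def by blast

lemma comp_hom[intro]: "f \<in> hom C A B \<Longrightarrow> g \<in> hom C B D \<Longrightarrow> g \<cdot> f \<in> hom C A D"
  using cat unfolding category_def hom_def by auto

lemma assoc: "f \<in> hom C A B \<Longrightarrow> g \<in> hom C B D \<Longrightarrow> h \<in> hom C D E \<Longrightarrow> h \<cdot> (g \<cdot> f) = (h \<cdot> g) \<cdot> f"
  using cat unfolding category_def hom_def by auto

lemma id_hom[intro]: "A \<in> Obj C \<Longrightarrow> Id C A \<in> hom C A A"
  using cat unfolding category_def by auto

lemma id_l[simp]: "f \<in> hom C A B \<Longrightarrow> Id C B \<cdot> f = f"
  using cat unfolding category_def hom_def by auto

lemma id_r[simp]: "f \<in> hom C A B \<Longrightarrow> f \<cdot> Id C A = f"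
  using cat unfolding category_def hom_def by auto

definition "zz = the_zero C"

lemma zz: "zero_obj C zz"
  using hfb someI_ex[of "zero_obj C"] unfolding has_finite_biproducts_def zz_def the_zero_def by blast

definition "toZ A = (THE f. f \<in> hom C A zz)"
definition "fromZ A = (THE f. f \<in> hom C zz A)"

lemma toZ: "A \<in> Obj C \<Longrightarrow> toZ A \<in> hom C A zz \<and> (\<forall>f \<in> hom C A zz. f = toZ A)"
  using zz unfolding zero_obj_def toZ_def by (metis (no_types, lifting) the_equality)

lemma fromZ: "A \<in> Obj C \<Longrightarrow> fromZ A \<in> hom C zz A \<and> (\<forall>f \<in> hom C zz A. f = fromZ A)"
  using zz unfolding zero_obj_def fromZ_def by (metis (no_types, lifting) the_equality)

lemma zm_def: "zero_mor C A B = fromZ B \<cdot> toZ A"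
  unfolding zero_mor_def fromZ_def toZ_def zz_def ..

lemma zm_hom[intro]: "A \<in> Obj C \<Longrightarrow> B \<in> Obj C \<Longrightarrow> zero_mor C A B \<in> hom C A B"
  using toZ fromZ zm_def by auto

lemma zm_r: assumes "f \<in> hom C A B" "D \<in> Obj C" shows "zero_mor C B D \<cdot> f = zero_mor C A D"
proof -
  have o: "A \<in> Obj C" "B \<in> Obj C" using hom_objs assms by auto
  have "toZ B \<cdot> f = toZ A" using toZ[OF o(1)] toZ[OF o(2)] assms by blast
  then show ?thesis unfolding zm_def using assoc[OF assms(1), of "toZ B" zz "fromZ D" D] toZ fromZ o assms
    by auto
qed

lemma zm_l: assumes "g \<in> hom C B D" "A \<in> Obj C" shows "g \<cdot> zero_mor C A B = zero_mor C A D"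
proof -
  have o: "B \<in> Obj C" "D \<in> Obj C" using hom_objs assms by auto
  have "g \<cdot> fromZ B = fromZ D" using fromZ[OF o(1)] fromZ[OF o(2)] assms by blast
  then show ?thesis unfolding zm_def using assoc[of "toZ A" A zz "fromZ B" B g D] toZ fromZ o assms
    by auto
qed


abbreviation "S A B \<equiv> bp_obj C A B"
abbreviation "i1 A B \<equiv> bp_i1 C A B"
abbreviation "i2 A B \<equiv> bp_i2 C A B"
abbreviation "p1 A B \<equiv> bp_p1 C A B"
abbreviation "p2 A B \<equiv> bp_p2 C A B"

lemma bp: assumes "A \<in> Obj C" "B \<in> Obj C"
  shows "is_biproduct C A B (S A B) (i1 A B) (i2 A B) (p1 A B) (p2 A B)"
proof -
  obtain s j1 j2 q1 q2 where "is_biproduct C A B s j1 j2 q1 q2"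
    using hfb assms unfolding has_finite_biproducts_def by blast
  then have "(\<lambda>(s, i1, i2, p1, p2). is_biproduct C A B s i1 i2 p1 p2) (bp C A B)"
    unfolding bp_def by (rule someI[where x="(s,j1,j2,q1,q2)" and P="\<lambda>(s, i1, i2, p1, p2). is_biproduct C A B s i1 i2 p1 p2", simplified])
  then show ?thesis unfolding bp_obj_def bp_i1_def bp_i2_def bp_p1_def bp_p2_def
    by (cases "bp C A B") auto
qed

context fixes A B assumes oA: "A \<in> Obj C" and oB: "B \<in> Obj C"
begin
lemma S_obj[intro]: "S A B \<in> Obj C" using bp[OF oA oB] unfolding is_biproduct_def by blast
lemma i1_hom[intro]: "i1 A B \<in> hom C A (S A B)" using bp[OF oA oB] unfolding is_biproduct_def by blast
lemma i2_hom[intro]: "i2 A B \<in> hom C B (S A B)" using bp[OF oA oB] unfolding is_biproduct_def by blast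
lemma p1_hom[intro]: "p1 A B \<in> hom C (S A B) A" using bp[OF oA oB] unfolding is_biproduct_def by blast
lemma p2_hom[intro]: "p2 A B \<in> hom C (S A B) B" using bp[OF oA oB] unfolding is_biproduct_def by blast
lemma p1i1[simp]: "p1 A B \<cdot> i1 A B = Id C A" using bp[OF oA oB] unfolding is_biproduct_def by blast
lemma p2i2[simp]: "p2 A B \<cdot> i2 A B = Id C B" using bp[OF oA oB] unfolding is_biproduct_def by blast
lemma p1i2[simp]: "p1 A B \<cdot> i2 A B = zero_mor C B A" using bp[OF oA oB] unfolding is_biproduct_def by blast
lemma p2i1[simp]: "p2 A B \<cdot> i1 A B = zero_mor C A B" using bp[OF oA oB] unfolding is_biproduct_def by blast

lemma prod_ex: assumes "f1 \<in> hom C Y A" "f2 \<in> hom C Y B"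
  shows "\<exists>!h. h \<in> hom C Y (S A B) \<and> p1 A B \<cdot> h = f1 \<and> p2 A B \<cdot> h = f2"
proof -
  have "\<forall>y \<in> Obj C. \<forall>f1 \<in> hom C y A. \<forall>f2 \<in> hom C y B.
        \<exists>!h. h \<in> hom C y (S A B) \<and> p1 A B \<cdot> h = f1 \<and> p2 A B \<cdot> h = f2"
    using bp[OF oA oB] unfolding is_biproduct_def by (elim conjE) assumption
  then show ?thesis using assms hom_objs[OF assms(1)] by simp
qed

lemma coprod_ex: assumes "f1 \<in> hom C A Y" "f2 \<in> hom C B Y"
  shows "\<exists>!h. h \<in> hom C (S A B) Y \<and> h \<cdot> i1 A B = f1 \<and> h \<cdot> i2 A B = f2"
proof -
  have "\<forall>y \<in> Obj C. \<forall>f1 \<in> hom C A y. \<forall>f2 \<in> hom C B y.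
        \<exists>!h. h \<in> hom C (S A B) y \<and> h \<cdot> i1 A B = f1 \<and> h \<cdot> i2 A B = f2"
    using bp[OF oA oB] unfolding is_biproduct_def by (elim conjE) assumption
  then show ?thesis using assms hom_objs[OF assms(1)] by simp
qed

lemma prod_uniq: assumes "h \<in> hom C Y (S A B)" "h' \<in> hom C Y (S A B)"
  "p1 A B \<cdot> h = p1 A B \<cdot> h'" "p2 A B \<cdot> h = p2 A B \<cdot> h'" shows "h = h'"
proof -
  have "p1 A B \<cdot> h \<in> hom C Y A" "p2 A B \<cdot> h \<in> hom C Y B"
    using comp_hom[OF assms(1) p1_hom] comp_hom[OF assms(1) p2_hom] .
  from prod_ex[OF this] assms show ?thesis by metis
qed

lemma coprod_uniq: assumes "h \<in> hom C (S A B) Y" "h' \<in> hom C (S A B) Y"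
  "h \<cdot> i1 A B = h' \<cdot> i1 A B" "h \<cdot> i2 A B = h' \<cdot> i2 A B" shows "h = h'"
proof -
  have "h \<cdot> i1 A B \<in> hom C A Y" "h \<cdot> i2 A B \<in> hom C B Y"
    using comp_hom[OF i1_hom assms(1)] comp_hom[OF i2_hom assms(1)] .
  from coprod_ex[OF this] assms show ?thesis by metis
qed

lemma the_tuple: assumes "f1 \<in> hom C Y A" "f2 \<in> hom C Y B"
  defines "t \<equiv> THE h. h \<in> hom C Y (S A B) \<and> p1 A B \<cdot> h = f1 \<and> p2 A B \<cdot> h = f2"
  shows "t \<in> hom C Y (S A B) \<and> p1 A B \<cdot> t = f1 \<and> p2 A B \<cdot> t = f2"
  unfolding t_def by (rule theI'[OF prod_ex[OF assms(1,2)]])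

lemma the_cotuple: assumes "f1 \<in> hom C A Y" "f2 \<in> hom C B Y"
  defines "t \<equiv> THE h. h \<in> hom C (S A B) Y \<and> h \<cdot> i1 A B = f1 \<and> h \<cdot> i2 A B = f2"
  shows "t \<in> hom C (S A B) Y \<and> t \<cdot> i1 A B = f1 \<and> t \<cdot> i2 A B = f2"
  unfolding t_def by (rule theI'[OF coprod_ex[OF assms(1,2)]])
end

lemma diag: assumes "X \<in> Obj C"
  shows "diag C X \<in> hom C X (S X X) \<and> p1 X X \<cdot> diag C X = Id C X \<and> p2 X X \<cdot> diag C X = Id C X"
  unfolding diag_def using the_tuple[OF assms assms id_hom[OF assms] id_hom[OF assms]] .

lemma codiag: assumes "X \<in> Obj C"
  shows "codiag C X \<in> hom C (S X X) X \<and> codiag C X \<cdot> i1 X X = Id C X \<and> codiag C X \<cdot> i2 X X = Id C X"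
  unfolding codiag_def using the_cotuple[OF assms assms id_hom[OF assms] id_hom[OF assms]] .

lemma bmap: assumes "f \<in> hom C A B" "g \<in> hom C A B"
  shows "bp_map C f g \<in> hom C (S A A) (S B B) \<and> p1 B B \<cdot> bp_map C f g = f \<cdot> p1 A A
     \<and> p2 B B \<cdot> bp_map C f g = g \<cdot> p2 A A"
proof -
  have o: "A \<in> Obj C" "B \<in> Obj C" using hom_objs assms by auto
  have d: "Dom C f = A" "Dom C g = A" "Cod C f = B" "Cod C g = B" using assms hom_arr by auto
  show ?thesis unfolding bp_map_def Let_def d
    by (rule the_tuple[OF o(2) o(2)]; rule comp_hom, use assms o in auto)
qed


lemma bmap_i1: assumes "f \<in> hom C A B" "g \<in> hom C A B"
  shows "bp_map C f g \<cdot> i1 A A = i1 B B \<cdot> f"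
proof -
  have o: "A \<in> Obj C" "B \<in> Obj C" using hom_objs assms by auto
  note bm = bmap[OF assms]
  show ?thesis
  proof (rule prod_uniq[OF o(2) o(2)])
    show "bp_map C f g \<cdot> i1 A A \<in> hom C A (S B B)" using bm i1_hom[OF o(1) o(1)] by blast
    show "i1 B B \<cdot> f \<in> hom C A (S B B)" using assms i1_hom[OF o(2) o(2)] by blast
    have "p1 B B \<cdot> (bp_map C f g \<cdot> i1 A A) = (f \<cdot> p1 A A) \<cdot> i1 A A"
      using assoc[OF i1_hom[OF o(1) o(1)], of "bp_map C f g" _ "p1 B B"] bm p1_hom[OF o(2) o(2)] by metis
    also have "\<dots> = f" using assoc[OF i1_hom[OF o(1) o(1)] p1_hom[OF o(1) o(1)] assms(1)] o assms by simp
    also have "\<dots> = p1 B B \<cdot> (i1 B B \<cdot> f)"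
      using assoc[OF assms(1) i1_hom[OF o(2) o(2)] p1_hom[OF o(2) o(2)]] o assms by simp
    finally show "p1 B B \<cdot> (bp_map C f g \<cdot> i1 A A) = p1 B B \<cdot> (i1 B B \<cdot> f)" .
    have "p2 B B \<cdot> (bp_map C f g \<cdot> i1 A A) = (g \<cdot> p2 A A) \<cdot> i1 A A"
      using assoc[OF i1_hom[OF o(1) o(1)], of "bp_map C f g" _ "p2 B B"] bm p2_hom[OF o(2) o(2)] by metis
    also have "\<dots> = zero_mor C A B"
      using assoc[OF i1_hom[OF o(1) o(1)] p2_hom[OF o(1) o(1)] assms(2)] o assms zm_l[OF assms(2) o(1)] by simp
    also have "\<dots> = p2 B B \<cdot> (i1 B B \<cdot> f)"
      using assoc[OF assms(1) i1_hom[OF o(2) o(2)] p2_hom[OF o(2) o(2)]] o assms zm_r[OF assms(1) o(2)] by simp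
    finally show "p2 B B \<cdot> (bp_map C f g \<cdot> i1 A A) = p2 B B \<cdot> (i1 B B \<cdot> f)" .
  qed
qed

lemma bmap_i2: assumes "f \<in> hom C A B" "g \<in> hom C A B"
  shows "bp_map C f g \<cdot> i2 A A = i2 B B \<cdot> g"
proof -
  have o: "A \<in> Obj C" "B \<in> Obj C" using hom_objs assms by auto
  note bm = bmap[OF assms]
  show ?thesis
  proof (rule prod_uniq[OF o(2) o(2)])
    show "bp_map C f g \<cdot> i2 A A \<in> hom C A (S B B)" using bm i2_hom[OF o(1) o(1)] by blast
    show "i2 B B \<cdot> g \<in> hom C A (S B B)" using assms i2_hom[OF o(2) o(2)] by blast
    have "p2 B B \<cdot> (bp_map C f g \<cdot> i2 A A) = (g \<cdot> p2 A A) \<cdot> i2 A A"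
      using assoc[OF i2_hom[OF o(1) o(1)], of "bp_map C f g" _ "p2 B B"] bm p2_hom[OF o(2) o(2)] by metis
    also have "\<dots> = g" using assoc[OF i2_hom[OF o(1) o(1)] p2_hom[OF o(1) o(1)] assms(2)] o assms by simp
    also have "\<dots> = p2 B B \<cdot> (i2 B B \<cdot> g)"
      using assoc[OF assms(2) i2_hom[OF o(2) o(2)] p2_hom[OF o(2) o(2)]] o assms by simp
    finally show "p2 B B \<cdot> (bp_map C f g \<cdot> i2 A A) = p2 B B \<cdot> (i2 B B \<cdot> g)" .
    have "p1 B B \<cdot> (bp_map C f g \<cdot> i2 A A) = (f \<cdot> p1 A A) \<cdot> i2 A A"
      using assoc[OF i2_hom[OF o(1) o(1)], of "bp_map C f g" _ "p1 B B"] bm p1_hom[OF o(2) o(2)] by metis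
    also have "\<dots> = zero_mor C A B"
      using assoc[OF i2_hom[OF o(1) o(1)] p1_hom[OF o(1) o(1)] assms(1)] o assms zm_l[OF assms(1) o(1)] by simp
    also have "\<dots> = p1 B B \<cdot> (i2 B B \<cdot> g)"
      using assoc[OF assms(2) i2_hom[OF o(2) o(2)] p1_hom[OF o(2) o(2)]] o assms zm_r[OF assms(2) o(2)] by simp
    finally show "p1 B B \<cdot> (bp_map C f g \<cdot> i2 A A) = p1 B B \<cdot> (i2 B B \<cdot> g)" .
  qed
qed

lemma cplus_unf: assumes "f \<in> hom C A B"
  shows "cplus C f g = codiag C B \<cdot> (bp_map C f g \<cdot> diag C A)"
  using hom_arr[OF assms] unfolding cplus_def by simp

lemma plus_hom[intro]: assumes "f \<in> hom C A B" "g \<in> hom C A B" shows "cplus C f g \<in> hom C A B"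
proof -
  have o: "A \<in> Obj C" "B \<in> Obj C" using hom_objs assms by auto
  show ?thesis unfolding cplus_unf[OF assms(1)]
    using codiag[OF o(2)] bmap[OF assms] diag[OF o(1)] by blast
qed

lemma CP: assumes "f \<in> hom C A B" "g \<in> hom C A B" "m \<in> hom C A (S B B)"
  "p1 B B \<cdot> m = f" "p2 B B \<cdot> m = g"
  shows "cplus C f g = codiag C B \<cdot> m"
proof -
  have o: "A \<in> Obj C" "B \<in> Obj C" using hom_objs assms by auto
  note bm = bmap[OF assms(1,2)] and d = diag[OF o(1)]
  have "bp_map C f g \<cdot> diag C A = m"
  proof (rule prod_uniq[OF o(2) o(2)])
    show "bp_map C f g \<cdot> diag C A \<in> hom C A (S B B)" using bm d by blast
    show "m \<in> hom C A (S B B)" by fact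
    have "p1 B B \<cdot> (bp_map C f g \<cdot> diag C A) = (f \<cdot> p1 A A) \<cdot> diag C A"
      using assoc[of "diag C A" A _ "bp_map C f g" _ "p1 B B"] bm d p1_hom[OF o(2) o(2)] by metis
    also have "\<dots> = f" using assoc[OF conjunct1[OF d] p1_hom[OF o(1) o(1)] assms(1)] d assms by simp
    finally show "p1 B B \<cdot> (bp_map C f g \<cdot> diag C A) = p1 B B \<cdot> m" using assms by simp
    have "p2 B B \<cdot> (bp_map C f g \<cdot> diag C A) = (g \<cdot> p2 A A) \<cdot> diag C A"
      using assoc[of "diag C A" A _ "bp_map C f g" _ "p2 B B"] bm d p2_hom[OF o(2) o(2)] by metis
    also have "\<dots> = g" using assoc[OF conjunct1[OF d] p2_hom[OF o(1) o(1)] assms(2)] d assms by simp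
    finally show "p2 B B \<cdot> (bp_map C f g \<cdot> diag C A) = p2 B B \<cdot> m" using assms by simp
  qed
  then show ?thesis using cplus_unf[OF assms(1)] by simp
qed

lemma CP': assumes "f \<in> hom C A B" "g \<in> hom C A B" "n \<in> hom C (S A A) B"
  "n \<cdot> i1 A A = f" "n \<cdot> i2 A A = g"
  shows "cplus C f g = n \<cdot> diag C A"
proof -
  have o: "A \<in> Obj C" "B \<in> Obj C" using hom_objs assms by auto
  note bm = bmap[OF assms(1,2)] and d = diag[OF o(1)] and cd = codiag[OF o(2)]
  have "codiag C B \<cdot> bp_map C f g = n"
  proof (rule coprod_uniq[OF o(1) o(1)])
    show "codiag C B \<cdot> bp_map C f g \<in> hom C (S A A) B" using bm cd by blast
    show "n \<in> hom C (S A A) B" by fact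
    have "(codiag C B \<cdot> bp_map C f g) \<cdot> i1 A A = codiag C B \<cdot> (i1 B B \<cdot> f)"
      using assoc[of "i1 A A" A _ "bp_map C f g" _ "codiag C B"] bm cd i1_hom[OF o(1) o(1)] bmap_i1[OF assms(1,2)] by metis
    also have "\<dots> = f" using assoc[OF assms(1) i1_hom[OF o(2) o(2)] conjunct1[OF cd]] cd assms by simp
    finally show "(codiag C B \<cdot> bp_map C f g) \<cdot> i1 A A = n \<cdot> i1 A A" using assms by simp
    have "(codiag C B \<cdot> bp_map C f g) \<cdot> i2 A A = codiag C B \<cdot> (i2 B B \<cdot> g)"
      using assoc[of "i2 A A" A _ "bp_map C f g" _ "codiag C B"] bm cd i2_hom[OF o(1) o(1)] bmap_i2[OF assms(1,2)] by metis
    also have "\<dots> = g" using assoc[OF assms(2) i2_hom[OF o(2) o(2)] conjunct1[OF cd]] cd assms by simp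
    finally show "(codiag C B \<cdot> bp_map C f g) \<cdot> i2 A A = n \<cdot> i2 A A" using assms by simp
  qed
  then show ?thesis using cplus_unf[OF assms(1)] assoc[of "diag C A" A _ "bp_map C f g" _ "codiag C B"] bm d cd
    by metis
qed


lemma tup: assumes "f \<in> hom C A B" "g \<in> hom C A B"
  obtains m where "m \<in> hom C A (S B B)" "p1 B B \<cdot> m = f" "p2 B B \<cdot> m = g" "cplus C f g = codiag C B \<cdot> m"
proof -
  have o: "A \<in> Obj C" "B \<in> Obj C" using hom_objs assms by auto
  obtain m where "m \<in> hom C A (S B B)" "p1 B B \<cdot> m = f" "p2 B B \<cdot> m = g"
    using prod_ex[OF o(2) o(2) assms] by blast
  then show ?thesis using that CP[OF assms] by blast
qed

lemma cotup: assumes "f \<in> hom C A B" "g \<in> hom C A B"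
  obtains n where "n \<in> hom C (S A A) B" "n \<cdot> i1 A A = f" "n \<cdot> i2 A A = g" "cplus C f g = n \<cdot> diag C A"
proof -
  have o: "A \<in> Obj C" "B \<in> Obj C" using hom_objs assms by auto
  obtain n where "n \<in> hom C (S A A) B" "n \<cdot> i1 A A = f" "n \<cdot> i2 A A = g"
    using coprod_ex[OF o(1) o(1) assms] by blast
  then show ?thesis using that CP'[OF assms] by blast
qed

lemma plus_0r: assumes "f \<in> hom C A B" shows "cplus C f (zero_mor C A B) = f"
proof -
  have o: "A \<in> Obj C" "B \<in> Obj C" using hom_objs assms by auto
  note i = i1_hom[OF o(2) o(2)] and cd = codiag[OF o(2)]
  have "cplus C f (zero_mor C A B) = codiag C B \<cdot> (i1 B B \<cdot> f)"
  proof (rule CP)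
    show "p1 B B \<cdot> (i1 B B \<cdot> f) = f" using assoc[OF assms i p1_hom[OF o(2) o(2)]] o assms by simp
    show "p2 B B \<cdot> (i1 B B \<cdot> f) = zero_mor C A B"
      using assoc[OF assms i p2_hom[OF o(2) o(2)]] o assms zm_r[OF assms o(2)] by simp
  qed (use assms o i in auto)
  also have "\<dots> = f" using assoc[OF assms i conjunct1[OF cd]] cd assms by simp
  finally show ?thesis .
qed

lemma plus_0l: assumes "f \<in> hom C A B" shows "cplus C (zero_mor C A B) f = f"
proof -
  have o: "A \<in> Obj C" "B \<in> Obj C" using hom_objs assms by auto
  note i = i2_hom[OF o(2) o(2)] and cd = codiag[OF o(2)]
  have "cplus C (zero_mor C A B) f = codiag C B \<cdot> (i2 B B \<cdot> f)"
  proof (rule CP)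
    show "p2 B B \<cdot> (i2 B B \<cdot> f) = f" using assoc[OF assms i p2_hom[OF o(2) o(2)]] o assms by simp
    show "p1 B B \<cdot> (i2 B B \<cdot> f) = zero_mor C A B"
      using assoc[OF assms i p1_hom[OF o(2) o(2)]] o assms zm_r[OF assms o(2)] by simp
  qed (use assms o i in auto)
  also have "\<dots> = f" using assoc[OF assms i conjunct1[OF cd]] cd assms by simp
  finally show ?thesis .
qed

lemma dist_r: assumes "f \<in> hom C A B" "g \<in> hom C A B" "k \<in> hom C W A"
  shows "cplus C f g \<cdot> k = cplus C (f \<cdot> k) (g \<cdot> k)"
proof -
  have o: "A \<in> Obj C" "B \<in> Obj C" using hom_objs assms by auto
  obtain m where m: "m \<in> hom C A (S B B)" "p1 B B \<cdot> m = f" "p2 B B \<cdot> m = g" "cplus C f g = codiag C B \<cdot> m"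
    using tup[OF assms(1,2)] by blast
  note cd = conjunct1[OF codiag[OF o(2)]]
  have "cplus C f g \<cdot> k = codiag C B \<cdot> (m \<cdot> k)" using m assoc[OF assms(3) m(1) cd] by simp
  also have "\<dots> = cplus C (f \<cdot> k) (g \<cdot> k)"
  proof (rule CP[symmetric])
    show "p1 B B \<cdot> (m \<cdot> k) = f \<cdot> k" using assoc[OF assms(3) m(1) p1_hom[OF o(2) o(2)]] m by simp
    show "p2 B B \<cdot> (m \<cdot> k) = g \<cdot> k" using assoc[OF assms(3) m(1) p2_hom[OF o(2) o(2)]] m by simp
  qed (use assms m in auto)
  finally show ?thesis .
qed

lemma dist_l: assumes "f \<in> hom C A B" "g \<in> hom C A B" "h \<in> hom C B D"
  shows "h \<cdot> cplus C f g = cplus C (h \<cdot> f) (h \<cdot> g)"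
proof -
  have o: "A \<in> Obj C" "B \<in> Obj C" using hom_objs assms by auto
  obtain n where n: "n \<in> hom C (S A A) B" "n \<cdot> i1 A A = f" "n \<cdot> i2 A A = g" "cplus C f g = n \<cdot> diag C A"
    using cotup[OF assms(1,2)] by blast
  note d = conjunct1[OF diag[OF o(1)]]
  have "h \<cdot> cplus C f g = (h \<cdot> n) \<cdot> diag C A" using n assoc[OF d n(1) assms(3)] by simp
  also have "\<dots> = cplus C (h \<cdot> f) (h \<cdot> g)"
  proof (rule CP'[symmetric])
    show "(h \<cdot> n) \<cdot> i1 A A = h \<cdot> f" using assoc[OF i1_hom[OF o(1) o(1)] n(1) assms(3)] n by simp
    show "(h \<cdot> n) \<cdot> i2 A A = h \<cdot> g" using assoc[OF i2_hom[OF o(1) o(1)] n(1) assms(3)] n by simp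
  qed (use assms n in auto)
  finally show ?thesis .
qed

lemma medial: assumes "a \<in> hom C A B" "b \<in> hom C A B" "c \<in> hom C A B" "d \<in> hom C A B"
  shows "cplus C (cplus C a b) (cplus C c d) = cplus C (cplus C a c) (cplus C b d)"
proof -
  have o: "A \<in> Obj C" "B \<in> Obj C" using hom_objs assms by auto
  obtain m1 where m1: "m1 \<in> hom C A (S B B)" "p1 B B \<cdot> m1 = a" "p2 B B \<cdot> m1 = c" "cplus C a c = codiag C B \<cdot> m1"
    using tup[OF assms(1,3)] by blast
  obtain m2 where m2: "m2 \<in> hom C A (S B B)" "p1 B B \<cdot> m2 = b" "p2 B B \<cdot> m2 = d" "cplus C b d = codiag C B \<cdot> m2"
    using tup[OF assms(2,4)] by blast
  note cd = conjunct1[OF codiag[OF o(2)]]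
  have "cplus C (cplus C a b) (cplus C c d) = codiag C B \<cdot> cplus C m1 m2"
  proof (rule CP)
    show "p1 B B \<cdot> cplus C m1 m2 = cplus C a b" using dist_l[OF m1(1) m2(1) p1_hom[OF o(2) o(2)]] m1 m2 by simp
    show "p2 B B \<cdot> cplus C m1 m2 = cplus C c d" using dist_l[OF m1(1) m2(1) p2_hom[OF o(2) o(2)]] m1 m2 by simp
  qed (use assms m1 m2 in auto)
  also have "\<dots> = cplus C (cplus C a c) (cplus C b d)" using dist_l[OF m1(1) m2(1) cd] m1 m2 by simp
  finally show ?thesis .
qed

lemma plus_comm: assumes "a \<in> hom C A B" "b \<in> hom C A B" shows "cplus C a b = cplus C b a"
proof -
  have o: "A \<in> Obj C" "B \<in> Obj C" using hom_objs assms by auto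
  note z = zm_hom[OF o]
  have "cplus C a b = cplus C (cplus C (zero_mor C A B) a) (cplus C b (zero_mor C A B))"
    using plus_0l plus_0r assms by simp
  also have "\<dots> = cplus C (cplus C (zero_mor C A B) b) (cplus C a (zero_mor C A B))"
    using medial[OF z assms(1,2) z] .
  also have "\<dots> = cplus C b a" using plus_0l plus_0r assms by simp
  finally show ?thesis .
qed

lemma plus_assoc: assumes "a \<in> hom C A B" "b \<in> hom C A B" "c \<in> hom C A B"
  shows "cplus C (cplus C a b) c = cplus C a (cplus C b c)"
proof -
  have o: "A \<in> Obj C" "B \<in> Obj C" using hom_objs assms by auto
  note z = zm_hom[OF o]
  have "cplus C (cplus C a b) c = cplus C (cplus C a b) (cplus C (zero_mor C A B) c)"
    using plus_0l assms by simp
  also have "\<dots> = cplus C (cplus C a (zero_mor C A B)) (cplus C b c)"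
    using medial[OF assms(1,2) z assms(3)] .
  also have "\<dots> = cplus C a (cplus C b c)" using plus_0r assms by simp
  finally show ?thesis .
qed

lemma Dlem: assumes "X \<in> Obj C"
  shows "cplus C (i1 X X \<cdot> p1 X X) (i2 X X \<cdot> p2 X X) = Id C (S X X)"
proof -
  note i1 = i1_hom[OF assms assms] and i2 = i2_hom[OF assms assms]
   and q1 = p1_hom[OF assms assms] and q2 = p2_hom[OF assms assms] and So = S_obj[OF assms assms]
  have h1: "i1 X X \<cdot> p1 X X \<in> hom C (S X X) (S X X)" "i2 X X \<cdot> p2 X X \<in> hom C (S X X) (S X X)"
    using i1 i2 q1 q2 by blast+
  show ?thesis
  proof (rule prod_uniq[OF assms assms])
    show "cplus C (i1 X X \<cdot> p1 X X) (i2 X X \<cdot> p2 X X) \<in> hom C (S X X) (S X X)" using h1 by blast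
    show "Id C (S X X) \<in> hom C (S X X) (S X X)" using So by blast
    have "p1 X X \<cdot> cplus C (i1 X X \<cdot> p1 X X) (i2 X X \<cdot> p2 X X)
       = cplus C (p1 X X \<cdot> (i1 X X \<cdot> p1 X X)) (p1 X X \<cdot> (i2 X X \<cdot> p2 X X))" using dist_l[OF h1 q1] .
    also have "\<dots> = cplus C (p1 X X) (zero_mor C (S X X) X)"
      using assoc[OF q1 i1 q1] assoc[OF q2 i2 q1] zm_r[OF q2 assms] assms q1 by simp
    also have "\<dots> = p1 X X \<cdot> Id C (S X X)" using plus_0r[OF q1] q1 by simp
    finally show "p1 X X \<cdot> cplus C (i1 X X \<cdot> p1 X X) (i2 X X \<cdot> p2 X X) = p1 X X \<cdot> Id C (S X X)" .
    have "p2 X X \<cdot> cplus C (i1 X X \<cdot> p1 X X) (i2 X X \<cdot> p2 X X)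
       = cplus C (p2 X X \<cdot> (i1 X X \<cdot> p1 X X)) (p2 X X \<cdot> (i2 X X \<cdot> p2 X X))" using dist_l[OF h1 q2] .
    also have "\<dots> = cplus C (zero_mor C (S X X) X) (p2 X X)"
      using assoc[OF q1 i1 q2] assoc[OF q2 i2 q2] zm_r[OF q1 assms] assms q2 by simp
    also have "\<dots> = p2 X X \<cdot> Id C (S X X)" using plus_0l[OF q2] q2 by simp
    finally show "p2 X X \<cdot> cplus C (i1 X X \<cdot> p1 X X) (i2 X X \<cdot> p2 X X) = p2 X X \<cdot> Id C (S X X)" .
  qed
qed

lemma decomp: assumes "X \<in> Obj C" "m \<in> hom C W (S X X)"
  shows "m = cplus C (i1 X X \<cdot> (p1 X X \<cdot> m)) (i2 X X \<cdot> (p2 X X \<cdot> m))"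
proof -
  note i1 = i1_hom[OF assms(1) assms(1)] and i2 = i2_hom[OF assms(1) assms(1)]
   and q1 = p1_hom[OF assms(1) assms(1)] and q2 = p2_hom[OF assms(1) assms(1)]
  have h1: "i1 X X \<cdot> p1 X X \<in> hom C (S X X) (S X X)" "i2 X X \<cdot> p2 X X \<in> hom C (S X X) (S X X)"
    using i1 i2 q1 q2 by blast+
  have "m = Id C (S X X) \<cdot> m" using assms by simp
  also have "\<dots> = cplus C ((i1 X X \<cdot> p1 X X) \<cdot> m) ((i2 X X \<cdot> p2 X X) \<cdot> m)"
    using Dlem[OF assms(1)] dist_r[OF h1 assms(2)] by simp
  also have "\<dots> = cplus C (i1 X X \<cdot> (p1 X X \<cdot> m)) (i2 X X \<cdot> (p2 X X \<cdot> m))"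
    using assoc[OF assms(2) q1 i1] assoc[OF assms(2) q2 i2] by simp
  finally show ?thesis .
qed


lemma fm: assumes "X \<in> Obj C" "f \<in> hom C (S X X) Y" "m \<in> hom C W (S X X)"
  shows "f \<cdot> m = cplus C ((f \<cdot> i1 X X) \<cdot> (p1 X X \<cdot> m)) ((f \<cdot> i2 X X) \<cdot> (p2 X X \<cdot> m))"
proof -
  note i1 = i1_hom[OF assms(1) assms(1)] and i2 = i2_hom[OF assms(1) assms(1)]
   and q1 = p1_hom[OF assms(1) assms(1)] and q2 = p2_hom[OF assms(1) assms(1)]
  have h: "i1 X X \<cdot> (p1 X X \<cdot> m) \<in> hom C W (S X X)" "i2 X X \<cdot> (p2 X X \<cdot> m) \<in> hom C W (S X X)"
    using assms i1 i2 q1 q2 by blast+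
  have "f \<cdot> m = f \<cdot> cplus C (i1 X X \<cdot> (p1 X X \<cdot> m)) (i2 X X \<cdot> (p2 X X \<cdot> m))"
    using decomp[OF assms(1,3)] by simp
  also have "\<dots> = cplus C (f \<cdot> (i1 X X \<cdot> (p1 X X \<cdot> m))) (f \<cdot> (i2 X X \<cdot> (p2 X X \<cdot> m)))"
    using dist_l[OF h assms(2)] .
  also have "\<dots> = cplus C ((f \<cdot> i1 X X) \<cdot> (p1 X X \<cdot> m)) ((f \<cdot> i2 X X) \<cdot> (p2 X X \<cdot> m))"
    using assoc[OF _ i1 assms(2), of "p1 X X \<cdot> m" W] assoc[OF _ i2 assms(2), of "p2 X X \<cdot> m" W] assms q1 q2
    by (metis comp_hom)
  finally show ?thesis .
qed

lemma fwd: assumes X: "X \<in> Obj C" and g: "g \<in> hom C X X"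
  and g1: "cplus C g (Id C X) = zero_mor C X X"
  shows "\<exists>f. split_epi C f \<and> is_kernel C (diag C X) f"
proof -
  note i1 = i1_hom[OF X X] and i2 = i2_hom[OF X X]
   and q1 = p1_hom[OF X X] and q2 = p2_hom[OF X X] and d = diag[OF X] and I = id_hom[OF X]
  obtain f where f: "f \<in> hom C (S X X) X" "f \<cdot> i1 X X = Id C X" "f \<cdot> i2 X X = g"
    using coprod_ex[OF X X I g] by blast
  have fa: "f \<in> Arr C" "Dom C f = S X X" "Cod C f = X" using hom_arr[OF f(1)] by auto
  have da: "diag C X \<in> Arr C" "Dom C (diag C X) = X" "Cod C (diag C X) = S X X" using hom_arr d by auto
  have se: "split_epi C f" unfolding split_epi_def using fa f i1 by auto
  have k1: "f \<cdot> diag C X = zero_mor C (S X X) X \<cdot> diag C X"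
  proof -
    have "f \<cdot> diag C X = cplus C (Id C X) g" using CP'[OF I g f(1) f(2,3)] by simp
    also have "\<dots> = zero_mor C X X" using plus_comm[OF I g] g1 by simp
    also have "\<dots> = zero_mor C (S X X) X \<cdot> diag C X" using zm_r[OF conjunct1[OF d] X] by simp
    finally show ?thesis .
  qed
  have k2: "\<exists>!u. u \<in> hom C w X \<and> diag C X \<cdot> u = m"
    if w: "w \<in> Obj C" and m: "m \<in> hom C w (S X X)" and fm0: "f \<cdot> m = zero_mor C (S X X) X \<cdot> m" for w m
  proof -
    define m1 where "m1 = p1 X X \<cdot> m"
    define m2 where "m2 = p2 X X \<cdot> m"
    have mh: "m1 \<in> hom C w X" "m2 \<in> hom C w X" unfolding m1_def m2_def using m q1 q2 by blast+
    have gm: "g \<cdot> m2 \<in> hom C w X" using mh g by blast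
    have s0: "cplus C m1 (g \<cdot> m2) = zero_mor C w X"
      using fm[OF X f(1) m] fm0 zm_r[OF m X] f mh unfolding m1_def m2_def by simp
    have "m1 = cplus C m1 (zero_mor C w X)" using plus_0r[OF mh(1)] by simp
    also have "zero_mor C w X = cplus C g (Id C X) \<cdot> m2" using g1 zm_r[OF mh(2) X] by simp
    also have "\<dots> = cplus C (g \<cdot> m2) m2" using dist_r[OF g I mh(2)] mh by simp
    also have "cplus C m1 (cplus C (g \<cdot> m2) m2) = cplus C (cplus C m1 (g \<cdot> m2)) m2"
      using plus_assoc[OF mh(1) gm mh(2)] by simp
    also have "\<dots> = m2" using s0 plus_0l[OF mh(2)] by simp
    finally have e: "m1 = m2" .
    have dm: "diag C X \<cdot> m1 = m"
    proof (rule prod_uniq[OF X X])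
      show "diag C X \<cdot> m1 \<in> hom C w (S X X)" using d mh by blast
      show "m \<in> hom C w (S X X)" by fact
      show "p1 X X \<cdot> (diag C X \<cdot> m1) = p1 X X \<cdot> m"
        using assoc[OF mh(1) conjunct1[OF d] q1] d mh unfolding m1_def by simp
      show "p2 X X \<cdot> (diag C X \<cdot> m1) = p2 X X \<cdot> m"
        using assoc[OF mh(1) conjunct1[OF d] q2] d mh e unfolding m2_def by simp
    qed
    show ?thesis
    proof (rule ex1I[of _ m1])
      show "m1 \<in> hom C w X \<and> diag C X \<cdot> m1 = m" using mh dm by simp
      fix u assume u: "u \<in> hom C w X \<and> diag C X \<cdot> u = m"
      have "p1 X X \<cdot> (diag C X \<cdot> u) = u" using assoc[OF _ conjunct1[OF d] q1, of u w] d id_l[of u w X] u by auto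
      then show "u = m1" using u unfolding m1_def by simp
    qed
  qed
  have "is_kernel C (diag C X) f"
    unfolding is_kernel_def using fa da k1 k2 by auto
  then show ?thesis using se by blast
qed


lemma bwd: assumes X: "X \<in> Obj C" and se: "split_epi C f" and ke: "is_kernel C (diag C X) f"
  shows "abelian_obj C X"
proof -
  note i1 = i1_hom[OF X X] and i2 = i2_hom[OF X X]
   and q1 = p1_hom[OF X X] and q2 = p2_hom[OF X X] and d = diag[OF X] and I = id_hom[OF X]
  define Y where "Y = Cod C f"
  have da: "diag C X \<in> Arr C" "Dom C (diag C X) = X" "Cod C (diag C X) = S X X" using hom_arr d by auto
  have ka: "f \<in> Arr C" using ke unfolding is_kernel_def by (elim conjE) assumption
  have kb: "Cod C (diag C X) = Dom C f" using ke unfolding is_kernel_def by (elim conjE) assumption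
  have kc: "f \<cdot> diag C X = zero_mor C (Dom C f) (Cod C f) \<cdot> diag C X"
    using ke unfolding is_kernel_def by (elim conjE) assumption
  have kd: "\<forall>w \<in> Obj C. \<forall>m \<in> hom C w (Dom C f).
        f \<cdot> m = zero_mor C (Dom C f) (Cod C f) \<cdot> m \<longrightarrow>
        (\<exists>!u. u \<in> hom C w (Dom C (diag C X)) \<and> diag C X \<cdot> u = m)"
    using ke unfolding is_kernel_def by (elim conjE) assumption
  note ke' = ka kb kc kd
  have fh: "f \<in> hom C (S X X) Y" using ke'(1,2) da(3) unfolding hom_def Y_def by simp
  have Yo: "Y \<in> Obj C" using hom_objs[OF fh] by simp
  have fd: "Dom C f = S X X" "Cod C f = Y" using hom_arr[OF fh] by auto
  obtain s where s: "s \<in> hom C Y (S X X)" "f \<cdot> s = Id C Y"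
    using se fd unfolding split_epi_def by auto
  have kf: "f \<cdot> diag C X = zero_mor C (S X X) Y \<cdot> diag C X" using ke'(3) fd by simp
  have ku: "\<And>w m. w \<in> Obj C \<Longrightarrow> m \<in> hom C w (S X X) \<Longrightarrow> f \<cdot> m = zero_mor C (S X X) Y \<cdot> m
      \<Longrightarrow> \<exists>!u. u \<in> hom C w X \<and> diag C X \<cdot> u = m"
    using ke'(4) fd da(2) by simp
  define a where "a = f \<cdot> i1 X X"
  define b where "b = f \<cdot> i2 X X"
  have ab: "a \<in> hom C X Y" "b \<in> hom C X Y" unfolding a_def b_def using fh i1 i2 by blast+
  have ab0: "cplus C a b = zero_mor C X Y"
    using CP'[OF ab fh] kf zm_r[OF conjunct1[OF d] Yo] unfolding a_def b_def by simp
  have key: "x = y" if x: "x \<in> hom C X X" and y: "y \<in> hom C X X"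
    and e: "cplus C (a \<cdot> x) (b \<cdot> y) = zero_mor C X Y" for x y
  proof -
    obtain m where m: "m \<in> hom C X (S X X)" "p1 X X \<cdot> m = x" "p2 X X \<cdot> m = y"
      using prod_ex[OF X X x y] by blast
    have "f \<cdot> m = zero_mor C (S X X) Y \<cdot> m"
      using fm[OF X fh m(1)] m e zm_r[OF m(1) Yo] unfolding a_def b_def by simp
    then obtain u where u: "u \<in> hom C X X" "diag C X \<cdot> u = m" using ku[OF X m(1)] by blast
    have "x = u" using assoc[OF u(1) conjunct1[OF d] q1] d u m by simp
    moreover have "y = u" using assoc[OF u(1) conjunct1[OF d] q2] d u m by simp
    ultimately show ?thesis by simp
  qed
  define s1 where "s1 = p1 X X \<cdot> s"
  define s2 where "s2 = p2 X X \<cdot> s"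
  have sh: "s1 \<in> hom C Y X" "s2 \<in> hom C Y X" unfolding s1_def s2_def using s q1 q2 by blast+
  have fs: "cplus C (a \<cdot> s1) (b \<cdot> s2) = Id C Y"
    using fm[OF X fh s(1)] s unfolding a_def b_def s1_def s2_def by simp
  have as1: "a \<cdot> s1 \<in> hom C Y Y" "b \<cdot> s2 \<in> hom C Y Y" using ab sh by blast+
  have h: "s1 \<cdot> a \<in> hom C X X" "s2 \<cdot> a \<in> hom C X X" "s1 \<cdot> b \<in> hom C X X" using ab sh by blast+
  have t: "cplus C (a \<cdot> (s1 \<cdot> a)) (b \<cdot> cplus C (s2 \<cdot> a) (Id C X)) = zero_mor C X Y"
  proof -
    have "cplus C (a \<cdot> (s1 \<cdot> a)) (b \<cdot> cplus C (s2 \<cdot> a) (Id C X))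
        = cplus C (a \<cdot> (s1 \<cdot> a)) (cplus C (b \<cdot> (s2 \<cdot> a)) b)"
      using dist_l[OF h(2) I ab(2)] ab by simp
    also have "\<dots> = cplus C (cplus C (a \<cdot> (s1 \<cdot> a)) (b \<cdot> (s2 \<cdot> a))) b"
    proof -
      have "a \<cdot> (s1 \<cdot> a) \<in> hom C X Y" "b \<cdot> (s2 \<cdot> a) \<in> hom C X Y"
        using comp_hom[OF h(1) ab(1)] comp_hom[OF h(2) ab(2)] .
      from plus_assoc[OF this ab(2)] show ?thesis by simp
    qed
    also have "cplus C (a \<cdot> (s1 \<cdot> a)) (b \<cdot> (s2 \<cdot> a)) = cplus C ((a \<cdot> s1) \<cdot> a) ((b \<cdot> s2) \<cdot> a)"
      using assoc[OF ab(1) sh(1) ab(1)] assoc[OF ab(1) sh(2) ab(2)] by simp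
    also have "\<dots> = cplus C (a \<cdot> s1) (b \<cdot> s2) \<cdot> a" using dist_r[OF as1 ab(1)] by simp
    also have "\<dots> = a" using fs ab by simp
    finally show ?thesis using ab0 by simp
  qed
  have e1: "s1 \<cdot> a = cplus C (s2 \<cdot> a) (Id C X)" using key[OF h(1) plus_hom[OF h(2) I] t] .
  define g where "g = cplus C (s2 \<cdot> a) (s1 \<cdot> b)"
  have gh: "g \<in> hom C X X" unfolding g_def using h by blast
  have g1: "cplus C g (Id C X) = zero_mor C X X"
  proof -
    have "cplus C g (Id C X) = cplus C (s2 \<cdot> a) (cplus C (s1 \<cdot> b) (Id C X))"
      unfolding g_def using plus_assoc[OF h(2,3) I] .
    also have "\<dots> = cplus C (s2 \<cdot> a) (cplus C (Id C X) (s1 \<cdot> b))" using plus_comm[OF h(3) I] by simp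
    also have "\<dots> = cplus C (cplus C (s2 \<cdot> a) (Id C X)) (s1 \<cdot> b)"
      using plus_assoc[OF h(2) I h(3)] by simp
    also have "\<dots> = cplus C (s1 \<cdot> a) (s1 \<cdot> b)" using e1 by simp
    also have "\<dots> = s1 \<cdot> cplus C a b" using dist_l[OF ab sh(1)] by simp
    also have "\<dots> = zero_mor C X X" using ab0 zm_l[OF sh(1) X] by simp
    finally show ?thesis .
  qed
  show ?thesis unfolding abelian_obj_def using X gh g1 plus_comm[OF gh I] by auto
qed

end

theorem theorem3p3:
  fixes C :: "('o, 'a) cat" and X :: 'o
  assumes "has_finite_biproducts C" and "X \<in> Obj C"
  shows "abelian_obj C X \<longleftrightarrow> (\<exists>f. split_epi C f \<and> is_kernel C (diag C X) f)"
proof -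
  interpret bpc C by unfold_locales (rule assms(1))
  show ?thesis
  proof
    assume "abelian_obj C X"
    then obtain g where "g \<in> hom C X X" "cplus C g (Id C X) = zero_mor C X X"
      unfolding abelian_obj_def by blast
    then show "\<exists>f. split_epi C f \<and> is_kernel C (diag C X) f" using fwd assms(2) by blast
  next
    assume "\<exists>f. split_epi C f \<and> is_kernel C (diag C X) f"
    then show "abelian_obj C X" using bwd assms(2) by blast
  qed
qed

end
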